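(* Let $C\subset\mathbb{R}^2$ be a centrally symmetric convex body and $P=(G,p,r)$ a $C$-packing. If $C$ is not a parallelogram, then $(G,p)$ is a planar framework.
   Context: A centrally symmetric convex body is a compact convex set with non-empty interior and $C=-C$. A $C$-packing $(G,p,r)$ is a finite family $\{r_vC+p_v:v\in V\}$ ($r_v>0$, $p_v\in\mathbb{R}^2$) with pairwise disjoint interiors, whose contact graph $G=(V,E)$ has $vw\in E$ iff $r_vC+p_v$ and $r_wC+p_w$ intersect. A framework $(G,p)$ is planar if $p_v\ne p_w$ for distinct $v,w$ and the segments $[p_v,p_w]$, $vw\in E$, intersect each other only at common endpoints. *)

theory Defs
  imports "HOL-Analysis.Analysis"
begin

definition cs_convex_body :: "(real^2) set \<Rightarrow> bool" where
  "cs_convex_body C \<longleftrightarrow> compact C \<and> convex C \<and> interior C \<noteq> {} \<and> uminus ` C = C"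

definition parallelogram :: "(real^2) set \<Rightarrow> bool" where
  "parallelogram S \<longleftrightarrow> (\<exists>a u v. u$1 * v$2 - u$2 * v$1 \<noteq> 0 \<and>
       S = convex hull {a, a + u, a + u + v, a + v})"

definition hcopy :: "(real^2) set \<Rightarrow> real \<Rightarrow> real^2 \<Rightarrow> (real^2) set" where
  "hcopy C r p = (\<lambda>x. r *\<^sub>R x + p) ` C"

definition C_packing ::
  "(real^2) set \<Rightarrow> 'v set \<Rightarrow> ('v \<times> 'v) set \<Rightarrow> ('v \<Rightarrow> real^2) \<Rightarrow> ('v \<Rightarrow> real) \<Rightarrow> bool" where
  "C_packing C V E p r \<longleftrightarrow>
     finite V \<and> (\<forall>v\<in>V. r v > 0) \<and>
     (\<forall>v\<in>V. \<forall>w\<in>V. v \<noteq> w \<longrightarrow>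
        interior (hcopy C (r v) (p v)) \<inter> interior (hcopy C (r w) (p w)) = {}) \<and>
     E = {(v, w). v \<in> V \<and> w \<in> V \<and> v \<noteq> w \<and>
                  hcopy C (r v) (p v) \<inter> hcopy C (r w) (p w) \<noteq> {}}"

definition planar_framework ::
  "'v set \<Rightarrow> ('v \<times> 'v) set \<Rightarrow> ('v \<Rightarrow> real^2) \<Rightarrow> bool" where
  "planar_framework V E p \<longleftrightarrow>
     inj_on p V \<and>
     (\<forall>a b c d. (a, b) \<in> E \<and> (c, d) \<in> E \<and> {a, b} \<noteq> {c, d} \<longrightarrow>
        closed_segment (p a) (p b) \<inter> closed_segment (p c) (p d) \<subseteq> p ` ({a, b} \<inter> {c, d}))"

end

theory Submission
  imports Defs
begin

locale gset =
  fixes C :: "(real^2) set" and \<epsilon> :: real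
  assumes cvx: "convex C" and cl: "closed C" and epos: "\<epsilon> > 0"
    and ball: "cball 0 \<epsilon> \<subseteq> C" and sym: "uminus ` C = C"
begin

definition S where "S x = {t. 0 < t \<and> inverse t *\<^sub>R x \<in> C}"
definition g where "g x = Inf (S x)"

lemma zero_in: "0 \<in> C" using ball epos by auto

lemma neg_in: "x \<in> C \<Longrightarrow> - x \<in> C"
  using sym by (metis imageI)

lemma S_ne: "S x \<noteq> {}"
proof -
  define t where "t = norm x / \<epsilon> + 1"
  have "norm x / \<epsilon> \<ge> 0" using epos by simp
  hence tp: "t > 0" by (simp add: t_def)
  have "norm (inverse t *\<^sub>R x) = norm x / t" using tp by (simp add: divide_inverse mult.commute)
  also have "\<dots> \<le> \<epsilon>"
  proof -
    have "norm x \<le> \<epsilon> * t" using epos by (simp add: t_def field_simps)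
    thus ?thesis using tp by (simp add: divide_le_eq mult.commute)
  qed
  finally have "inverse t *\<^sub>R x \<in> C" using ball by auto
  thus ?thesis using tp unfolding S_def by auto
qed

lemma S_bdd: "bdd_below (S x)"
  unfolding S_def bdd_below_def by (rule exI[of _ 0]) auto

lemma g_nonneg: "g x \<ge> 0"
  unfolding g_def by (rule cInf_greatest[OF S_ne]) (auto simp: S_def)

lemma g_le: "t > 0 \<Longrightarrow> inverse t *\<^sub>R x \<in> C \<Longrightarrow> g x \<le> t"
  unfolding g_def by (rule cInf_lower[OF _ S_bdd]) (auto simp: S_def)

lemma S_up: assumes "s \<in> S x" "s \<le> t" shows "t \<in> S x"
proof -
  have sp: "s > 0" and sx: "inverse s *\<^sub>R x \<in> C" using assms by (auto simp: S_def)
  have tp: "t > 0" using sp assms by simp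
  have "(s / t) *\<^sub>R (inverse s *\<^sub>R x) + (1 - s/t) *\<^sub>R 0 \<in> C"
    by (rule convexD[OF cvx sx zero_in]) (use sp tp assms in auto)
  moreover have "(s / t) *\<^sub>R (inverse s *\<^sub>R x) + (1 - s/t) *\<^sub>R 0 = inverse t *\<^sub>R x"
    using sp by (simp add: inverse_eq_divide)
  ultimately have "inverse t *\<^sub>R x \<in> C" by metis
  thus ?thesis using tp unfolding S_def by blast
qed

lemma g_lt: assumes "g x < t" shows "t > 0" "inverse t *\<^sub>R x \<in> C"
proof -
  obtain s where "s \<in> S x" "s < t" using cInf_lessD[OF S_ne] assms unfolding g_def by blast
  hence "t \<in> S x" using S_up by auto
  thus "t > 0" "inverse t *\<^sub>R x \<in> C" by (auto simp: S_def)
qed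

lemma in_C_iff: "x \<in> C \<longleftrightarrow> g x \<le> 1"
proof
  assume "x \<in> C" thus "g x \<le> 1" using g_le[of 1 x] by simp
next
  assume h: "g x \<le> 1"
  have "x \<in> closure C"
    unfolding closure_approachable
  proof (intro allI impI)
    fix e :: real assume e: "e > 0"
    define t where "t = 1 + e / (norm x + 1)"
    have tp: "t > 1" using e by (simp add: t_def) (smt (verit) divide_pos_pos norm_ge_zero)
    have m: "inverse t *\<^sub>R x \<in> C" using g_lt(2)[of x t] h tp by simp
    have "x - inverse t *\<^sub>R x = (1 - inverse t) *\<^sub>R x" by (simp add: algebra_simps)
    hence "dist (inverse t *\<^sub>R x) x = \<bar>1 - inverse t\<bar> * norm x"
      by (simp add: dist_norm norm_minus_commute)
    also have "\<dots> = (1 - inverse t) * norm x"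
    proof -
      have "inverse t < 1" using tp by (simp add: inverse_less_1_iff)
      thus ?thesis by simp
    qed
    also have "\<dots> \<le> (t - 1) * norm x"
    proof (rule mult_right_mono)
      have "1 - inverse t = (t - 1) / t" using tp by (simp add: field_simps)
      also have "\<dots> \<le> t - 1" using tp by (simp add: divide_le_eq)
      finally show "1 - inverse t \<le> t - 1" .
    qed simp
    also have "\<dots> = e * norm x / (norm x + 1)" by (simp add: t_def)
    also have "\<dots> < e"
      using e by (simp add: divide_less_eq add_pos_nonneg) (smt (verit) norm_ge_zero)
    finally show "\<exists>y\<in>C. dist y x < e" using m by blast
  qed
  thus "x \<in> C" using cl by (simp add: closure_closed)
qed

lemma S_neg: "S (- x) = S x"
  unfolding S_def using neg_in by force

lemma g_neg: "g (- x) = g x" unfolding g_def using S_neg by simp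

lemma g_zero: "g 0 = 0"
proof -
  have "S 0 = {0<..}" unfolding S_def using zero_in by auto
  thus ?thesis unfolding g_def by simp
qed

lemma g_scale_le: assumes "c > 0" shows "g (c *\<^sub>R x) \<le> c * g x"
proof -
  have "g (c *\<^sub>R x) / c \<le> g x"
    unfolding g_def[of x]
  proof (rule cInf_greatest[OF S_ne])
    fix t assume "t \<in> S x"
    hence "t > 0" "inverse t *\<^sub>R x \<in> C" by (auto simp: S_def)
    hence "g (c *\<^sub>R x) \<le> c * t" using assms by (intro g_le) (auto simp: field_simps)
    thus "g (c *\<^sub>R x) / c \<le> t" using assms by (simp add: divide_le_eq mult.commute)
  qed
  thus ?thesis using assms by (simp add: divide_le_eq mult.commute)
qed

lemma g_scale_pos: assumes "c > 0" shows "g (c *\<^sub>R x) = c * g x"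
proof -
  have "g x = g (inverse c *\<^sub>R (c *\<^sub>R x))" using assms by simp
  also have "\<dots> \<le> inverse c * g (c *\<^sub>R x)" using assms by (intro g_scale_le) auto
  finally have "c * g x \<le> g (c *\<^sub>R x)" using assms by (simp add: field_simps)
  thus ?thesis using g_scale_le[OF assms, of x] by simp
qed

lemma g_scale: "g (c *\<^sub>R x) = \<bar>c\<bar> * g x"
proof (cases "c = 0")
  case True thus ?thesis by (simp add: g_zero)
next
  case False
  show ?thesis
  proof (cases "c > 0")
    case True thus ?thesis by (simp add: g_scale_pos)
  next
    case False
    hence "-c > 0" using \<open>c \<noteq> 0\<close> by auto
    have "g (c *\<^sub>R x) = g ((-c) *\<^sub>R x)" by (metis g_neg scaleR_minus_left)
    also have "\<dots> = (-c) * g x" using \<open>-c > 0\<close> by (rule g_scale_pos)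
    finally show ?thesis using \<open>-c > 0\<close> by simp
  qed
qed

lemma g_triangle: "g (x + y) \<le> g x + g y"
proof -
  have key: "g (x + y) \<le> s + t" if "s \<in> S x" "t \<in> S y" for s t
  proof -
    have sp: "s > 0" "inverse s *\<^sub>R x \<in> C" "t > 0" "inverse t *\<^sub>R y \<in> C"
      using that by (auto simp: S_def)
    have st: "s + t > 0" "s + t \<noteq> 0" using sp by auto
    have "(s/(s+t)) *\<^sub>R (inverse s *\<^sub>R x) + (t/(s+t)) *\<^sub>R (inverse t *\<^sub>R y) \<in> C"
      by (rule convexD[OF cvx sp(2) sp(4)]) (use sp st in \<open>auto simp: add_divide_distrib[symmetric] divide_nonneg_pos less_imp_le\<close>)
    moreover have "(s/(s+t)) *\<^sub>R (inverse s *\<^sub>R x) + (t/(s+t)) *\<^sub>R (inverse t *\<^sub>R y)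
        = inverse (s+t) *\<^sub>R (x + y)"
      using sp st by (simp add: scaleR_add_right field_simps)
    ultimately show ?thesis using sp by (intro g_le) auto
  qed
  have "g (x + y) - g y \<le> g x"
    unfolding g_def[of x]
  proof (rule cInf_greatest[OF S_ne])
    fix s assume s: "s \<in> S x"
    have "g (x + y) - s \<le> g y"
      unfolding g_def[of y]
      by (rule cInf_greatest[OF S_ne]) (use key s in \<open>force\<close>)
    thus "g (x + y) - g y \<le> s" by simp
  qed
  thus ?thesis by simp
qed

lemma g_le_norm: "g x \<le> norm x / \<epsilon>"
proof (cases "x = 0")
  case True thus ?thesis by (simp add: g_zero)
next
  case False
  define t where "t = norm x / \<epsilon>"
  have tp: "t > 0" using False epos by (simp add: t_def)
  have "norm (inverse t *\<^sub>R x) = \<epsilon>" using tp epos False by (simp add: t_def)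
  hence "inverse t *\<^sub>R x \<in> C" using ball by auto
  thus ?thesis using g_le tp t_def by blast
qed


lemma hcopy_iff: assumes "r > 0" shows "z \<in> hcopy C r p \<longleftrightarrow> g (z - p) \<le> r"
proof
  assume "z \<in> hcopy C r p"
  then obtain c where c: "c \<in> C" "z = r *\<^sub>R c + p" unfolding hcopy_def by auto
  have "g (z - p) = r * g c" using c assms by (simp add: g_scale)
  also have "\<dots> \<le> r * 1" using c(1) in_C_iff assms by (intro mult_left_mono) auto
  finally show "g (z - p) \<le> r" by simp
next
  assume h: "g (z - p) \<le> r"
  define c where "c = inverse r *\<^sub>R (z - p)"
  have "g c = g (z - p) / r" using assms by (simp add: c_def g_scale divide_inverse mult.commute)
  also have "\<dots> \<le> 1" using h assms by simp
  finally have "c \<in> C" using in_C_iff by simp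
  moreover have "z = r *\<^sub>R c + p" using assms by (simp add: c_def)
  ultimately show "z \<in> hcopy C r p" unfolding hcopy_def by auto
qed

lemma hcopy_interior: assumes "r > 0" "g (z - p) < r" shows "z \<in> interior (hcopy C r p)"
  unfolding mem_interior
proof (intro exI conjI)
  show "\<epsilon> * (r - g (z - p)) > 0" using assms epos by simp
  show "ball z (\<epsilon> * (r - g (z - p))) \<subseteq> hcopy C r p"
  proof
    fix z' assume "z' \<in> ball z (\<epsilon> * (r - g (z - p)))"
    hence d: "norm (z' - z) < \<epsilon> * (r - g (z - p))" by (simp add: dist_norm norm_minus_commute)
    have "g (z' - p) \<le> g (z' - z) + g (z - p)" using g_triangle[of "z' - z" "z - p"] by simp
    also have "g (z' - z) \<le> norm (z' - z) / \<epsilon>" by (rule g_le_norm)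
    also have "norm (z' - z) / \<epsilon> < r - g (z - p)" using d epos by (simp add: divide_less_eq mult.commute)
    finally show "z' \<in> hcopy C r p" using hcopy_iff[OF assms(1)] by simp
  qed
qed

lemma flat1:
  assumes "g x = 1" "g z = 1" "\<alpha> > 0" "\<beta> > 0" "g (\<alpha> *\<^sub>R x + \<beta> *\<^sub>R z) = \<alpha> + \<beta>"
    "a > 0" "b \<ge> 0" "b * \<alpha> \<le> a * \<beta>"
  shows "g (a *\<^sub>R x + b *\<^sub>R z) \<ge> a + b"
proof -
  define G where "G = g (a *\<^sub>R x + b *\<^sub>R z)"
  define c where "c = \<beta> - \<alpha> * b / a"
  have "\<alpha> * b / a \<le> \<beta>" using assms(6,8) by (simp add: divide_le_eq mult.commute)
  hence c0: "c \<ge> 0" by (simp add: c_def)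
  have e1: "(\<alpha> / a) *\<^sub>R (a *\<^sub>R x + b *\<^sub>R z) = \<alpha> *\<^sub>R x + (\<alpha> * b / a) *\<^sub>R z"
    using assms(6) by (simp add: scaleR_add_right)
  have e2: "c *\<^sub>R z = \<beta> *\<^sub>R z - (\<alpha> * b / a) *\<^sub>R z" by (simp add: c_def scaleR_left_diff_distrib)
  have eq: "\<alpha> *\<^sub>R x + \<beta> *\<^sub>R z = (\<alpha> / a) *\<^sub>R (a *\<^sub>R x + b *\<^sub>R z) + c *\<^sub>R z"
    unfolding e1 e2 by simp
  have "\<alpha> + \<beta> \<le> g ((\<alpha> / a) *\<^sub>R (a *\<^sub>R x + b *\<^sub>R z)) + g (c *\<^sub>R z)"
    unfolding assms(5)[symmetric] eq by (rule g_triangle)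
  also have "g ((\<alpha> / a) *\<^sub>R (a *\<^sub>R x + b *\<^sub>R z)) = (\<alpha> / a) * G"
    using assms(3,6) by (simp add: g_scale G_def)
  also have "g (c *\<^sub>R z) = c" using c0 assms(2) by (simp add: g_scale)
  finally have "\<alpha> + \<alpha> * b / a \<le> (\<alpha> / a) * G" by (simp add: c_def)
  hence "a * (\<alpha> + \<alpha> * b / a) \<le> a * ((\<alpha> / a) * G)"
    by (rule mult_left_mono) (use assms(6) in auto)
  moreover have "a * (\<alpha> + \<alpha> * b / a) = \<alpha> * (a + b)" using assms(6) by (simp add: field_simps)
  moreover have "a * ((\<alpha> / a) * G) = \<alpha> * G" using assms(6) by simp
  ultimately have "\<alpha> * (a + b) \<le> \<alpha> * G" by simp
  thus ?thesis using assms(3) G_def by simp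
qed

lemma flat:
  assumes "g x = 1" "g z = 1" "\<alpha> > 0" "\<beta> > 0" "g (\<alpha> *\<^sub>R x + \<beta> *\<^sub>R z) = \<alpha> + \<beta>"
    "a \<ge> 0" "b \<ge> 0"
  shows "g (a *\<^sub>R x + b *\<^sub>R z) \<ge> a + b"
proof (cases "b * \<alpha> \<le> a * \<beta>")
  case True
  show ?thesis
  proof (cases "a = 0")
    case True
    have "b * \<alpha> \<le> 0" using \<open>b * \<alpha> \<le> a * \<beta>\<close> True by simp
    hence "b = 0" using assms(3,7) by (simp add: mult_le_0_iff)
    thus ?thesis using True g_nonneg by simp
  next
    case False
    hence "a > 0" using assms(6) by simp
    from flat1[OF assms(1-5) this assms(7) \<open>b * \<alpha> \<le> a * \<beta>\<close>] show ?thesis .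
  qed
next
  case False
  hence "a * \<beta> < b * \<alpha>" by simp
  hence b0: "b > 0" using assms(3,4,6,7)
    by (metis mult_nonneg_nonneg mult_zero_left not_less order_le_less)
  have "g (\<beta> *\<^sub>R z + \<alpha> *\<^sub>R x) = \<beta> + \<alpha>" using assms(5) by (simp add: add.commute)
  from flat1[OF assms(2,1,4,3) this b0 assms(6)] False
  show ?thesis by (simp add: add.commute mult.commute)
qed

lemma share:
  assumes ra: "ra > 0" and rb: "rb > 0" and rd: "rd > 0"
    and eb: "g (pb - pa) = ra + rb" and ed: "g (pd - pa) = ra + rd"
    and bd: "g (pb - pd) \<ge> rb + rd"
    and y1: "y \<in> closed_segment pa pb" and y2: "y \<in> closed_segment pa pd"
  shows "y = pa"
proof (rule ccontr)
  assume ne: "y \<noteq> pa"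
  obtain s where s: "0 \<le> s" "s \<le> 1" "y = (1 - s) *\<^sub>R pa + s *\<^sub>R pb" using y1 in_segment(1) by blast
  obtain t where t: "0 \<le> t" "t \<le> 1" "y = (1 - t) *\<^sub>R pa + t *\<^sub>R pd" using y2 in_segment(1) by blast
  have ys: "y - pa = s *\<^sub>R (pb - pa)" using s by (simp add: algebra_simps)
  have yt: "y - pa = t *\<^sub>R (pd - pa)" using t by (simp add: algebra_simps)
  have sp: "s > 0" using ne ys s by (cases "s = 0") auto
  have tp: "t > 0" using ne yt t by (cases "t = 0") auto
  have "s * (ra + rb) = t * (ra + rd)"
    using arg_cong[of _ _ g, OF ys[symmetric, unfolded yt]] s t eb ed by (simp add: g_scale)
  hence st: "s / t * (ra + rb) = ra + rd" using tp by (simp add: field_simps)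
  have "pd - pa = inverse t *\<^sub>R (y - pa)" using yt tp by simp
  also have "\<dots> = (s / t) *\<^sub>R (pb - pa)" using ys by (simp add: divide_inverse mult.commute)
  finally have "pd - pa = (s / t) *\<^sub>R (pb - pa)" .
  hence "pb - pd = (1 - s / t) *\<^sub>R (pb - pa)" by (simp add: algebra_simps)
  hence "g (pb - pd) = \<bar>1 - s / t\<bar> * (ra + rb)" by (simp add: g_scale eb)
  also have "\<dots> = \<bar>(1 - s / t) * (ra + rb)\<bar>" using ra rb by (simp add: abs_mult)
  also have "\<dots> = \<bar>rb - rd\<bar>" using st by (simp add: left_diff_distrib)
  finally show False using bd rb rd by simp
qed


lemma g_comm: "g (x - y) = g (y - x)"
  by (metis g_neg minus_diff_eq)

lemma tri2: "g (x - z) \<le> g (x - y) + g (z - y)"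
proof -
  have "x - z = (x - y) + (- (z - y))" by simp
  hence "g (x - z) \<le> g (x - y) + g (- (z - y))" using g_triangle by metis
  thus ?thesis by (simp add: g_neg g_comm[of y z])
qed

lemma bound_all:
  assumes gu: "g u = 1" and gw: "g w = 1" and ra: "ra > 0" and rc: "rc > 0" and rd: "rd > 0"
    and eac: "g (ra *\<^sub>R u + rc *\<^sub>R (- w)) = ra + rc"
    and ead: "g (ra *\<^sub>R u + rd *\<^sub>R w) = ra + rd"
  shows "g (\<alpha> *\<^sub>R u + \<beta> *\<^sub>R w) \<ge> \<bar>\<alpha>\<bar> + \<bar>\<beta>\<bar>"
proof -
  have gwn: "g (- w) = 1" using gw g_neg by simp
  have pp: "g (a *\<^sub>R u + b *\<^sub>R w) \<ge> a + b" if "a \<ge> 0" "b \<ge> 0" for a b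
    using flat[OF gu gw ra rd ead that] .
  have pm: "g (a *\<^sub>R u + b *\<^sub>R (- w)) \<ge> a + b" if "a \<ge> 0" "b \<ge> 0" for a b
    using flat[OF gu gwn ra rc eac that] .
  show ?thesis
  proof (cases "\<alpha> \<ge> 0")
    case a: True
    show ?thesis
    proof (cases "\<beta> \<ge> 0")
      case True thus ?thesis using pp[OF a True] a by simp
    next
      case False
      have "\<alpha> *\<^sub>R u + \<beta> *\<^sub>R w = \<alpha> *\<^sub>R u + (- \<beta>) *\<^sub>R (- w)" by simp
      thus ?thesis using pm[OF a, of "- \<beta>"] a False by simp
    qed
  next
    case a: False
    show ?thesis
    proof (cases "\<beta> \<ge> 0")
      case True
      have "\<alpha> *\<^sub>R u + \<beta> *\<^sub>R w = - ((- \<alpha>) *\<^sub>R u + \<beta> *\<^sub>R (- w))" by simp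
      hence "g (\<alpha> *\<^sub>R u + \<beta> *\<^sub>R w) = g ((- \<alpha>) *\<^sub>R u + \<beta> *\<^sub>R (- w))" using g_neg by metis
      thus ?thesis using pm[of "- \<alpha>" \<beta>] a True by simp
    next
      case False
      have "\<alpha> *\<^sub>R u + \<beta> *\<^sub>R w = - ((- \<alpha>) *\<^sub>R u + (- \<beta>) *\<^sub>R w)" by simp
      hence "g (\<alpha> *\<^sub>R u + \<beta> *\<^sub>R w) = g ((- \<alpha>) *\<^sub>R u + (- \<beta>) *\<^sub>R w)" using g_neg by metis
      thus ?thesis using pp[of "- \<alpha>" "- \<beta>"] a False by simp
    qed
  qed
qed

lemma para_from_bound:
  assumes gu: "g u = 1" and gw: "g w = 1"
    and bnd: "\<And>\<alpha> \<beta>. g (\<alpha> *\<^sub>R u + \<beta> *\<^sub>R w) \<ge> \<bar>\<alpha>\<bar> + \<bar>\<beta>\<bar>"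
  shows "parallelogram C"
proof -
  define dt where "dt = u$1 * w$2 - u$2 * w$1"
  have dt: "dt \<noteq> 0"
  proof
    assume d0: "dt = 0"
    have "w$2 *\<^sub>R u + (- u$2) *\<^sub>R w = 0"
      using d0 by (simp add: vec_eq_iff forall_2 dt_def algebra_simps)
    hence "\<bar>w$2\<bar> + \<bar>- u$2\<bar> \<le> 0" using bnd[of "w$2" "- u$2"] g_zero by simp
    hence u2: "u$2 = 0" by simp
    have "w$1 *\<^sub>R u + (- u$1) *\<^sub>R w = 0"
      using d0 by (simp add: vec_eq_iff forall_2 dt_def algebra_simps)
    hence "\<bar>w$1\<bar> + \<bar>- u$1\<bar> \<le> 0" using bnd[of "w$1" "- u$1"] g_zero by simp
    hence u1: "u$1 = 0" by simp
    have "u = 0" using u1 u2 by (simp add: vec_eq_iff forall_2)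
    thus False using gu g_zero by simp
  qed
  define P where "P = convex hull {u, w, - u, - w}"
  have cP: "convex P" unfolding P_def by simp
  have inP: "u \<in> P" "w \<in> P" "- u \<in> P" "- w \<in> P" unfolding P_def by (simp_all add: hull_inc)
  have "(1/2::real) *\<^sub>R u + (1/2::real) *\<^sub>R (- u) \<in> P"
    by (rule convexD[OF cP inP(1) inP(3)]) auto
  hence zP: "0 \<in> P" by simp
  have "C \<subseteq> P"
  proof
    fix x assume xC: "x \<in> C"
    define \<alpha> where "\<alpha> = (x$1 * w$2 - x$2 * w$1) / dt"
    define \<beta> where "\<beta> = (u$1 * x$2 - u$2 * x$1) / dt"
    have "\<alpha> * u$1 + \<beta> * w$1 = ((x$1 * w$2 - x$2 * w$1) * u$1 + (u$1 * x$2 - u$2 * x$1) * w$1) / dt"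
      by (simp add: \<alpha>_def \<beta>_def add_divide_distrib)
    also have "(x$1 * w$2 - x$2 * w$1) * u$1 + (u$1 * x$2 - u$2 * x$1) * w$1 = x$1 * dt"
      by (simp add: dt_def algebra_simps)
    finally have c1: "\<alpha> * u$1 + \<beta> * w$1 = x$1" using dt by simp
    have "\<alpha> * u$2 + \<beta> * w$2 = ((x$1 * w$2 - x$2 * w$1) * u$2 + (u$1 * x$2 - u$2 * x$1) * w$2) / dt"
      by (simp add: \<alpha>_def \<beta>_def add_divide_distrib)
    also have "(x$1 * w$2 - x$2 * w$1) * u$2 + (u$1 * x$2 - u$2 * x$1) * w$2 = x$2 * dt"
      by (simp add: dt_def algebra_simps)
    finally have c2: "\<alpha> * u$2 + \<beta> * w$2 = x$2" using dt by simp
    have xe: "x = \<alpha> *\<^sub>R u + \<beta> *\<^sub>R w"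
      by (auto simp: vec_eq_iff forall_2 c1 c2)
    have "\<bar>\<alpha>\<bar> + \<bar>\<beta>\<bar> \<le> 1" using bnd[of \<alpha> \<beta>] xC in_C_iff xe by simp
    define e1 where "e1 = (if \<alpha> \<ge> 0 then u else - u)"
    define e2 where "e2 = (if \<beta> \<ge> 0 then w else - w)"
    have "x = \<bar>\<alpha>\<bar> *\<^sub>R e1 + \<bar>\<beta>\<bar> *\<^sub>R e2 + (1 - \<bar>\<alpha>\<bar> - \<bar>\<beta>\<bar>) *\<^sub>R 0"
      unfolding xe e1_def e2_def by auto
    hence "x \<in> convex hull {e1, e2, 0}" unfolding convex_hull_3
      using \<open>\<bar>\<alpha>\<bar> + \<bar>\<beta>\<bar> \<le> 1\<close> by (intro CollectI exI[of _ "\<bar>\<alpha>\<bar>"] exI[of _ "\<bar>\<beta>\<bar>"]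
        exI[of _ "1 - \<bar>\<alpha>\<bar> - \<bar>\<beta>\<bar>"]) auto
    moreover have "convex hull {e1, e2, 0} \<subseteq> P"
      by (rule hull_minimal) (use inP zP cP e1_def e2_def in auto)
    ultimately show "x \<in> P" by blast
  qed
  moreover have "P \<subseteq> C" unfolding P_def
    by (rule hull_minimal) (use gu gw in_C_iff g_neg cvx in auto)
  ultimately have CP: "C = P" by blast
  show ?thesis unfolding parallelogram_def
  proof (intro exI conjI)
    show "(w - u)$1 * (- w - u)$2 - (w - u)$2 * (- w - u)$1 \<noteq> 0"
      using dt by (simp add: dt_def algebra_simps)
    have "{u, u + (w - u), u + (w - u) + (- w - u), u + (- w - u)} = {u, w, - u, - w}"
      by (simp add: algebra_simps)
    thus "C = convex hull {u, u + (w - u), u + (w - u) + (- w - u), u + (- w - u)}"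
      using CP P_def by simp
  qed
qed


lemma four:
  assumes ra: "ra > 0" and rb: "rb > 0" and rc: "rc > 0" and rd: "rd > 0"
    and ab: "g (pa - pb) \<le> ra + rb" and cd: "g (pc - pd) \<le> rc + rd"
    and ac: "g (pa - pc) \<ge> ra + rc" and ad: "g (pa - pd) \<ge> ra + rd"
    and bc: "g (pb - pc) \<ge> rb + rc" and bd: "g (pb - pd) \<ge> rb + rd"
    and y1: "y \<in> closed_segment pa pb" and y2: "y \<in> closed_segment pc pd"
  shows "parallelogram C"
proof -
  obtain s where s: "0 \<le> s" "s \<le> 1" "y = (1 - s) *\<^sub>R pa + s *\<^sub>R pb" using y1 in_segment(1) by blast
  obtain t where t: "0 \<le> t" "t \<le> 1" "y = (1 - t) *\<^sub>R pc + t *\<^sub>R pd" using y2 in_segment(1) by blast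
  have ya: "pa - y = s *\<^sub>R (pa - pb)" using s by (simp add: algebra_simps)
  have yb: "pb - y = (1 - s) *\<^sub>R (pb - pa)" using s by (simp add: algebra_simps)
  have yc: "pc - y = t *\<^sub>R (pc - pd)" using t by (simp add: algebra_simps)
  have yd: "pd - y = (1 - t) *\<^sub>R (pd - pc)" using t by (simp add: algebra_simps)
  define G1 where "G1 = g (pa - pb)"
  define G2 where "G2 = g (pc - pd)"
  have A: "g (pa - y) = s * G1" using ya s by (simp add: g_scale G1_def)
  have B: "g (pb - y) = (1 - s) * G1" using yb s by (simp add: g_scale G1_def g_comm[of pb pa])
  have Cc: "g (pc - y) = t * G2" using yc t by (simp add: g_scale G2_def)
  have Dd: "g (pd - y) = (1 - t) * G2" using yd t by (simp add: g_scale G2_def g_comm[of pd pc])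
  have s1: "s * G1 + (1 - s) * G1 = G1" "t * G2 + (1 - t) * G2 = G2" by (simp_all add: algebra_simps)
  have t1: "g (pa - pc) \<le> g (pa - y) + g (pc - y)" by (rule tri2)
  have t2: "g (pa - pd) \<le> g (pa - y) + g (pd - y)" by (rule tri2)
  have t3: "g (pb - pc) \<le> g (pb - y) + g (pc - y)" by (rule tri2)
  have t4: "g (pb - pd) \<le> g (pb - y) + g (pd - y)" by (rule tri2)
  have Ar: "s * G1 = ra" and Cr: "t * G2 = rc" and Dr: "(1 - t) * G2 = rd"
    and eac: "g (pa - pc) = ra + rc" and ead: "g (pa - pd) = ra + rd"
    using t1 t2 t3 t4 A B Cc Dd s1 ab cd ac ad bc bd G1_def G2_def by linarith+
  define u where "u = inverse ra *\<^sub>R (pa - y)"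
  define w where "w = inverse rc *\<^sub>R (pc - y)"
  have gu: "g u = 1" using ra A Ar by (simp add: u_def g_scale)
  have gw: "g w = 1" using rc Cc Cr by (simp add: w_def g_scale)
  have hu: "ra *\<^sub>R u = pa - y" using ra by (simp add: u_def)
  have hw: "rc *\<^sub>R w = pc - y" using rc by (simp add: w_def)
  have "rd * t = (1 - t) * rc" using Cr Dr by (metis mult.assoc mult.commute)
  hence coef: "rd * inverse rc * t = 1 - t" using rc by (simp add: field_simps)
  have hd: "rd *\<^sub>R w = - (pd - y)"
  proof -
    have "rd *\<^sub>R w = (rd * inverse rc * t) *\<^sub>R (pc - pd)" by (simp add: w_def yc mult.assoc)
    also have "\<dots> = (1 - t) *\<^sub>R (pc - pd)" using coef by simp
    also have "\<dots> = - (pd - y)" using yd by (simp add: algebra_simps)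
    finally show ?thesis .
  qed
  have "ra *\<^sub>R u + rc *\<^sub>R (- w) = (pa - y) - (pc - y)" by (simp add: hu hw)
  hence e1: "ra *\<^sub>R u + rc *\<^sub>R (- w) = pa - pc" by simp
  have "ra *\<^sub>R u + rd *\<^sub>R w = (pa - y) + - (pd - y)" by (simp only: hu hd)
  hence e2: "ra *\<^sub>R u + rd *\<^sub>R w = pa - pd" by simp
  show ?thesis
    by (rule para_from_bound[OF gu gw bound_all[OF gu gw ra rc rd]])
      (use e1 e2 eac ead in auto)
qed

end

lemma zero_interior:
  assumes "cs_convex_body C" shows "0 \<in> interior C"
proof -
  have cv: "convex C" and ne: "interior C \<noteq> {}" and sy: "uminus ` C = C"
    using assms unfolding cs_convex_body_def by auto
  obtain z where z: "z \<in> interior C" using ne by blast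
  have "interior C = uminus ` interior C" using interior_negations[of C] sy by simp
  hence mz: "- z \<in> interior C" using z by (metis imageI)
  have "(1/2::real) *\<^sub>R z + (1/2::real) *\<^sub>R (- z) \<in> interior C"
    by (rule convexD[OF convex_interior[OF cv] z mz]) auto
  thus ?thesis by simp
qed

theorem lemma3p11:
  fixes C :: "(real^2) set" and V :: "'v set" and E :: "('v \<times> 'v) set"
    and p :: "'v \<Rightarrow> real^2" and r :: "'v \<Rightarrow> real"
  assumes "cs_convex_body C"
    and "C_packing C V E p r"
    and "\<not> parallelogram C"
  shows "planar_framework V E p"
proof -
  obtain \<epsilon> where ep: "\<epsilon> > 0" "cball 0 \<epsilon> \<subseteq> C"
    using zero_interior[OF assms(1)] mem_interior_cball by blast
  interpret G: gset C \<epsilon>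
    using assms(1) ep unfolding cs_convex_body_def
    by unfold_locales (auto simp: compact_imp_closed)
  have rpos: "\<And>v. v \<in> V \<Longrightarrow> r v > 0" using assms(2) unfolding C_packing_def by auto
  have disj: "\<And>v w. v \<in> V \<Longrightarrow> w \<in> V \<Longrightarrow> v \<noteq> w \<Longrightarrow>
      interior (hcopy C (r v) (p v)) \<inter> interior (hcopy C (r w) (p w)) = {}"
    using assms(2) unfolding C_packing_def by auto
  have Edef: "E = {(v, w). v \<in> V \<and> w \<in> V \<and> v \<noteq> w \<and>
                  hcopy C (r v) (p v) \<inter> hcopy C (r w) (p w) \<noteq> {}}"
    using assms(2) unfolding C_packing_def by auto
  have pk: "G.g (p v - p w) \<ge> r v + r w" if vw: "v \<in> V" "w \<in> V" "v \<noteq> w" for v w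
  proof (rule ccontr)
    assume "\<not> ?thesis"
    hence dl: "G.g (p v - p w) < r v + r w" by simp
    define S where "S = r v + r w"
    have rv: "r v > 0" and rw: "r w > 0" using rpos vw by auto
    have Sp: "S > 0" using rv rw S_def by simp
    define z where "z = p w + (r w / S) *\<^sub>R (p v - p w)"
    have "G.g (z - p w) = (r w / S) * G.g (p v - p w)" using rw Sp by (simp add: z_def G.g_scale)
    also have "\<dots> < (r w / S) * S" using dl rw Sp S_def by (intro mult_strict_left_mono) auto
    also have "\<dots> = r w" using Sp by simp
    finally have z1: "z \<in> interior (hcopy C (r w) (p w))" using G.hcopy_interior rw by blast
    have "z - p v = - ((r v / S) *\<^sub>R (p v - p w))"
    proof -
      have "z - p v = (r w / S - 1) *\<^sub>R (p v - p w)" by (simp add: z_def algebra_simps)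
      also have "r w / S - 1 = - (r v / S)" using Sp by (simp add: S_def field_simps)
      finally show ?thesis by simp
    qed
    hence "G.g (z - p v) = (r v / S) * G.g (p v - p w)" using rv Sp by (simp add: G.g_neg G.g_scale)
    also have "\<dots> < (r v / S) * S" using dl rv Sp S_def by (intro mult_strict_left_mono) auto
    also have "\<dots> = r v" using Sp by simp
    finally have z2: "z \<in> interior (hcopy C (r v) (p v))" using G.hcopy_interior rv by blast
    show False using disj[OF vw] z1 z2 by blast
  qed
  have ed: "v \<in> V \<and> w \<in> V \<and> v \<noteq> w \<and> G.g (p v - p w) = r v + r w" if "(v, w) \<in> E" for v w
  proof -
    have vw: "v \<in> V" "w \<in> V" "v \<noteq> w" and ne: "hcopy C (r v) (p v) \<inter> hcopy C (r w) (p w) \<noteq> {}"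
      using that Edef by auto
    obtain z where "z \<in> hcopy C (r v) (p v)" "z \<in> hcopy C (r w) (p w)" using ne by blast
    hence "G.g (z - p v) \<le> r v" "G.g (z - p w) \<le> r w" using G.hcopy_iff rpos vw by auto
    hence "G.g (p v - p w) \<le> r v + r w"
      using G.tri2[of "p v" "p w" z] G.g_comm[of "p v" z] G.g_comm[of "p w" z] by linarith
    thus ?thesis using pk[OF vw] vw by simp
  qed
  have shr: "y = p x" if "(x, b) \<in> E" "(x, d) \<in> E" "b \<noteq> d"
      "y \<in> closed_segment (p x) (p b)" "y \<in> closed_segment (p x) (p d)" for x b d y
  proof -
    have h1: "x \<in> V" "b \<in> V" "x \<noteq> b" "G.g (p x - p b) = r x + r b" using ed[OF that(1)] by auto
    have h2: "d \<in> V" "x \<noteq> d" "G.g (p x - p d) = r x + r d" using ed[OF that(2)] by auto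
    show ?thesis
      by (rule G.share[OF rpos[OF h1(1)] rpos[OF h1(2)] rpos[OF h2(1)] _ _ pk[OF h1(2) h2(1) that(3)]
          that(4,5)]) (use h1 h2 G.g_comm in auto)
  qed
  show ?thesis unfolding planar_framework_def
  proof (intro conjI allI impI)
    show "inj_on p V"
    proof (rule inj_onI, rule ccontr)
      fix v w assume "v \<in> V" "w \<in> V" "p v = p w" "v \<noteq> w"
      thus False using pk[of v w] rpos[of v] rpos[of w] G.g_zero by simp
    qed
  next
    fix a b c d
    assume h: "(a, b) \<in> E \<and> (c, d) \<in> E \<and> {a, b} \<noteq> {c, d}"
    hence ab: "(a, b) \<in> E" and cd: "(c, d) \<in> E" and ne: "{a, b} \<noteq> {c, d}" by auto
    have eab: "a \<in> V" "b \<in> V" "a \<noteq> b" "G.g (p a - p b) = r a + r b" using ed[OF ab] by auto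
    have ecd: "c \<in> V" "d \<in> V" "c \<noteq> d" "G.g (p c - p d) = r c + r d" using ed[OF cd] by auto
    have Es: "(v, w) \<in> E \<Longrightarrow> (w, v) \<in> E" for v w using Edef by auto
    show "closed_segment (p a) (p b) \<inter> closed_segment (p c) (p d) \<subseteq> p ` ({a, b} \<inter> {c, d})"
    proof
      fix y assume y: "y \<in> closed_segment (p a) (p b) \<inter> closed_segment (p c) (p d)"
      hence y1: "y \<in> closed_segment (p a) (p b)" and y2: "y \<in> closed_segment (p c) (p d)" by auto
      show "y \<in> p ` ({a, b} \<inter> {c, d})"
      proof (cases "a = c")
        case True
        have bd: "b \<noteq> d" using ne True by auto
        have "y = p a" using shr[OF ab _ bd y1] cd y2 True by auto
        thus ?thesis using True by auto
      next
        case nac: False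
        show ?thesis
        proof (cases "a = d")
          case True
          hence "b \<noteq> c" using ne by auto
          have "y \<in> closed_segment (p a) (p c)" using y2 True closed_segment_commute by metis
          hence "y = p a" using shr[OF ab Es[OF cd[unfolded True[symmetric]]] \<open>b \<noteq> c\<close> y1] by auto
          thus ?thesis using True by auto
        next
          case nad: False
          show ?thesis
          proof (cases "b = c")
            case True
            hence "a \<noteq> d" using ne by auto
            have "y \<in> closed_segment (p b) (p a)" using y1 closed_segment_commute by metis
            moreover have "(b, d) \<in> E" using cd True by simp
            ultimately have "y = p b" using shr[OF Es[OF ab] _ \<open>a \<noteq> d\<close>] y2 True by auto
            thus ?thesis using True by auto
          next
            case nbc: False
            show ?thesis
            proof (cases "b = d")
              case True
              hence "a \<noteq> c" using ne by auto
              have "y \<in> closed_segment (p b) (p a)" using y1 closed_segment_commute by metis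
              moreover have "y \<in> closed_segment (p b) (p c)" using y2 True closed_segment_commute by metis
              moreover have "(b, c) \<in> E" using Es[OF cd] True by simp
              ultimately have "y = p b" using shr[OF Es[OF ab] _ \<open>a \<noteq> c\<close>] by auto
              thus ?thesis using True by auto
            next
              case nbd: False
              have "parallelogram C"
                by (rule G.four[OF rpos[OF eab(1)] rpos[OF eab(2)] rpos[OF ecd(1)] rpos[OF ecd(2)]
                    _ _ pk[OF eab(1) ecd(1) nac] pk[OF eab(1) ecd(2) nad]
                    pk[OF eab(2) ecd(1) nbc] pk[OF eab(2) ecd(2) nbd] y1 y2])
                  (use eab ecd in auto)
              thus ?thesis using assms(3) by simp
            qed
          qed
        qed
      qed
    qed
  qed
qed

end
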